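(* Let $\mathcal G=(V,E,r)$ be a non-null graph. (1) An atom $a\in\mathbf A(\mathcal G)$ with $\operatorname{supp}(a)=(V',E',r')$ is prime if and only if $\deg_{\mathcal G}(v)\le 1$ for all $v\in V'$. (2) Let $a$ be an atom of $\mathbf A(\mathcal G)$ and $b\in\mathbf A(\mathcal G)$. If $a$ is a summand of $nb$ for some $n\ge1$, then $a$ is a summand of $b$. (3) Every atom of $\mathbf A(\mathcal G)$ is absolutely irreducible. (4) Let $\mathcal G_1,\dots,\mathcal G_s$ be pairwise disjoint, connected, non-null subgraphs of $\mathcal G$. Then the factorization of $a=\mathbf 1_{\mathcal G_1}+\dots+\mathbf 1_{\mathcal G_s}$ into atoms is unique up to order.
   Context: A graph $\mathcal G=(V,E,r)$ consists of a finite vertex set $V$, a finite edge set $E$ disjoint from $V$, and a map $r$ assigning to each edge a two-element subset of $V$; multiple edges allowed, no loops; non-null means $V\ne\emptyset$. $\deg_{\mathcal G}(v)$ is the number of edges incident with $v$. An agglomeration on $\mathcal G$ is a function $a\colon V\cup E\to\mathbb N_0$ with $a(v)\ge a(e)$ whenever $v$ is incident with $e$; $\mathbf A(\mathcal G)$ is the monoid of agglomerations under pointwise addition. $\operatorname{supp}(a)$ is the subgraph of vertices and edges where $a$ is positive; $\mathbf 1_{\mathcal G'}$ is the indicator of a subgraph. $a$ is a summand of $b$ if $b=a+c$ for some $c\in\mathbf A(\mathcal G)$. An atom is a nonzero element not a sum of two nonzero elements; an atom $p$ is prime if whenever $p$ is a summand of $b+c$ it is a summand of $b$ or of $c$; an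 atom $a$ is absolutely irreducible if for every $n\ge1$ the only factorization of $na$ into atoms is $a+\dots+a$. *)

theory Defs
  imports Main "HOL-Library.Multiset"
begin

text \<open>A graph (V,E,r): vertices and edges live in one ambient type 'a, V and E are
  finite and disjoint, r maps each edge to a two-element subset of V (multi-edges
  allowed, no loops).\<close>
definition graph :: "'a set \<Rightarrow> 'a set \<Rightarrow> ('a \<Rightarrow> 'a set) \<Rightarrow> bool" where
  "graph V E r \<longleftrightarrow> finite V \<and> finite E \<and> V \<inter> E = {} \<and>
     (\<forall>e\<in>E. r e \<subseteq> V \<and> card (r e) = 2)"

definition deg :: "'a set \<Rightarrow> ('a \<Rightarrow> 'a set) \<Rightarrow> 'a \<Rightarrow> nat" where
  "deg E r v = card {e\<in>E. v \<in> r e}"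

text \<open>Agglomerations: functions V \<union> E \<rightarrow> N0, represented as functions on 'a that
  vanish outside V \<union> E.\<close>
definition agg :: "'a set \<Rightarrow> 'a set \<Rightarrow> ('a \<Rightarrow> 'a set) \<Rightarrow> ('a \<Rightarrow> nat) \<Rightarrow> bool" where
  "agg V E r a \<longleftrightarrow> (\<forall>x. x \<notin> V \<union> E \<longrightarrow> a x = 0) \<and> (\<forall>e\<in>E. \<forall>v\<in>r e. a e \<le> a v)"

definition aplus :: "('a \<Rightarrow> nat) \<Rightarrow> ('a \<Rightarrow> nat) \<Rightarrow> 'a \<Rightarrow> nat" where
  "aplus a b = (\<lambda>x. a x + b x)"

definition azero :: "'a \<Rightarrow> nat" where
  "azero = (\<lambda>x. 0)"

definition asmult :: "nat \<Rightarrow> ('a \<Rightarrow> nat) \<Rightarrow> 'a \<Rightarrow> nat" where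
  "asmult n a = (\<lambda>x. n * a x)"

definition summand :: "'a set \<Rightarrow> 'a set \<Rightarrow> ('a \<Rightarrow> 'a set) \<Rightarrow> ('a \<Rightarrow> nat) \<Rightarrow> ('a \<Rightarrow> nat) \<Rightarrow> bool" where
  "summand V E r a b \<longleftrightarrow> (\<exists>c. agg V E r c \<and> b = aplus a c)"

definition atom :: "'a set \<Rightarrow> 'a set \<Rightarrow> ('a \<Rightarrow> 'a set) \<Rightarrow> ('a \<Rightarrow> nat) \<Rightarrow> bool" where
  "atom V E r a \<longleftrightarrow> agg V E r a \<and> a \<noteq> azero \<and>
     \<not> (\<exists>b c. agg V E r b \<and> agg V E r c \<and> b \<noteq> azero \<and> c \<noteq> azero \<and> a = aplus b c)"

definition prime_agg :: "'a set \<Rightarrow> 'a set \<Rightarrow> ('a \<Rightarrow> 'a set) \<Rightarrow> ('a \<Rightarrow> nat) \<Rightarrow> bool" where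
  "prime_agg V E r p \<longleftrightarrow> atom V E r p \<and>
     (\<forall>b c. agg V E r b \<longrightarrow> agg V E r c \<longrightarrow> summand V E r p (aplus b c) \<longrightarrow>
        summand V E r p b \<or> summand V E r p c)"

definition msum :: "('a \<Rightarrow> nat) multiset \<Rightarrow> 'a \<Rightarrow> nat" where
  "msum M = (\<lambda>x. \<Sum>\<^sub># (image_mset (\<lambda>f. f x) M))"

text \<open>A factorization of a into atoms, as a multiset of atoms (so order is irrelevant).\<close>
definition factorization :: "'a set \<Rightarrow> 'a set \<Rightarrow> ('a \<Rightarrow> 'a set) \<Rightarrow> ('a \<Rightarrow> nat) \<Rightarrow> ('a \<Rightarrow> nat) multiset \<Rightarrow> bool" where
  "factorization V E r a M \<longleftrightarrow> (\<forall>f\<in>#M. atom V E r f) \<and> a = msum M"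

definition abs_irred :: "'a set \<Rightarrow> 'a set \<Rightarrow> ('a \<Rightarrow> 'a set) \<Rightarrow> ('a \<Rightarrow> nat) \<Rightarrow> bool" where
  "abs_irred V E r a \<longleftrightarrow> atom V E r a \<and>
     (\<forall>n\<ge>1. \<forall>M. factorization V E r (asmult n a) M \<longrightarrow> M = replicate_mset n a)"

definition subgraph :: "'a set \<Rightarrow> 'a set \<Rightarrow> ('a \<Rightarrow> 'a set) \<Rightarrow> 'a set \<Rightarrow> 'a set \<Rightarrow> bool" where
  "subgraph V E r V' E' \<longleftrightarrow> V' \<subseteq> V \<and> E' \<subseteq> E \<and> (\<forall>e\<in>E'. r e \<subseteq> V')"

definition adj :: "'a set \<Rightarrow> ('a \<Rightarrow> 'a set) \<Rightarrow> ('a \<times> 'a) set" where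
  "adj E' r = {(u, w). \<exists>e\<in>E'. u \<in> r e \<and> w \<in> r e}"

definition connected_sub :: "'a set \<Rightarrow> ('a \<Rightarrow> 'a set) \<Rightarrow> 'a set \<Rightarrow> bool" where
  "connected_sub V' r E' \<longleftrightarrow> V' \<noteq> {} \<and> (\<forall>u\<in>V'. \<forall>w\<in>V'. (u, w) \<in> (adj E' r)\<^sup>*)"

definition ind :: "'a set \<Rightarrow> 'a set \<Rightarrow> 'a \<Rightarrow> nat" where
  "ind V' E' = (\<lambda>x. if x \<in> V' \<union> E' then 1 else 0)"

end

theory Submission
  imports Defs
begin

lemma graph_edge:
  assumes "graph V E r" "e \<in> E"
  shows "r e \<subseteq> V" "r e \<noteq> {}"
proof -
  have "r e \<subseteq> V \<and> card (r e) = 2" using assms unfolding graph_def by blast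
  then show "r e \<subseteq> V" "r e \<noteq> {}" by auto
qed

lemma graph_disj: "graph V E r \<Longrightarrow> x \<in> V \<Longrightarrow> x \<notin> E"
  unfolding graph_def by blast

lemma agg_edge: "agg V E r a \<Longrightarrow> e \<in> E \<Longrightarrow> v \<in> r e \<Longrightarrow> a e \<le> a v"
  unfolding agg_def by blast

lemma agg_out: "agg V E r a \<Longrightarrow> x \<notin> V \<Longrightarrow> x \<notin> E \<Longrightarrow> a x = 0"
  unfolding agg_def by blast

lemma agg_plus: "agg V E r a \<Longrightarrow> agg V E r b \<Longrightarrow> agg V E r (aplus a b)"
  unfolding agg_def aplus_def by (auto intro: add_mono)

lemma ind_agg: "graph V E r \<Longrightarrow> subgraph V E r V2 E2 \<Longrightarrow> agg V E r (ind V2 E2)"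
  unfolding agg_def subgraph_def ind_def graph_def by auto

lemma ind_val: "ind V2 E2 x = (if x \<in> V2 \<union> E2 then 1 else 0)"
  unfolding ind_def by simp

lemma atom_le1:
  assumes "atom V E r a"
  shows "a x \<le> 1"
proof (rule ccontr)
  assume "\<not> a x \<le> 1"
  define b where "b = (\<lambda>y. min (a y) (1::nat))"
  define c where "c = (\<lambda>y. a y - 1)"
  have ag: "agg V E r a" using assms unfolding atom_def by blast
  have "agg V E r b" using ag unfolding agg_def b_def by (auto simp: min_le_iff_disj)
  moreover have "agg V E r c" using ag unfolding agg_def c_def by (auto intro: diff_le_mono)
  moreover have "b x = 1" using \<open>\<not> a x \<le> 1\<close> unfolding b_def by simp
  then have "b \<noteq> azero" unfolding azero_def by auto
  moreover have "c x \<noteq> 0" using \<open>\<not> a x \<le> 1\<close> unfolding c_def by simp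
  then have "c \<noteq> azero" unfolding azero_def by auto
  moreover have "a = aplus b c" unfolding aplus_def b_def c_def by (auto simp: min_def)
  ultimately show False using assms unfolding atom_def by blast
qed

lemma atom_vertex:
  assumes "graph V E r" "atom V E r a"
  shows "\<exists>v\<in>V. a v = 1"
proof -
  have ag: "agg V E r a" and nz: "a \<noteq> azero" using assms unfolding atom_def by blast+
  obtain y where y: "a y \<noteq> 0" using nz unfolding azero_def by auto
  have le: "\<And>x. a x \<le> 1" using atom_le1[OF assms(2)] .
  have "y \<in> V \<or> y \<in> E" using agg_out[OF ag, of y] y by blast
  then show ?thesis
  proof
    assume "y \<in> V" then show ?thesis using y le[of y] by (intro bexI[of _ y]) auto
  next
    assume "y \<in> E"
    then obtain v where v: "v \<in> r y" using graph_edge[OF assms(1)] by blast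
    then have "v \<in> V" using graph_edge[OF assms(1) \<open>y \<in> E\<close>] by blast
    moreover have "a y \<le> a v" using agg_edge[OF ag \<open>y \<in> E\<close> v] .
    ultimately show ?thesis using y le[of v] by (intro bexI[of _ v]) auto
  qed
qed

lemma sym_adj: "sym (adj E' r)"
  unfolding adj_def sym_def by blast

lemma adj_rt_sym: "(u, w) \<in> (adj E' r)\<^sup>* \<Longrightarrow> (w, u) \<in> (adj E' r)\<^sup>*"
  by (rule symD[OF sym_rtrancl[OF sym_adj]])
lemma atom_form:
  assumes G: "graph V E r" and A: "atom V E r a"
  defines "V' \<equiv> {v\<in>V. a v = 1}" and "E' \<equiv> {e\<in>E. a e = 1}"
  shows "a = ind V' E'" "subgraph V E r V' E'" "connected_sub V' r E'"
proof -
  have ag: "agg V E r a" using A unfolding atom_def by blast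
  have le: "\<And>x. a x \<le> 1" using atom_le1[OF A] .
  have disj: "\<And>x. x \<in> V \<Longrightarrow> x \<notin> E" using graph_disj[OF G] .
  show aeq: "a = ind V' E'"
  proof
    fix x
    show "a x = ind V' E' x"
    proof (cases "x \<in> V \<or> x \<in> E")
      case True
      then show ?thesis using le[of x] disj[of x] unfolding ind_def V'_def E'_def by auto
    next
      case False
      then show ?thesis using agg_out[OF ag, of x] unfolding ind_def V'_def E'_def by auto
    qed
  qed
  show sg: "subgraph V E r V' E'"
    unfolding subgraph_def
  proof (intro conjI ballI)
    fix e assume "e \<in> E'"
    then have e: "e \<in> E" "a e = 1" unfolding E'_def by auto
    show "r e \<subseteq> V'"
    proof
      fix v assume v: "v \<in> r e"
      have "a e \<le> a v" using agg_edge[OF ag e(1) v] .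
      then show "v \<in> V'" using le[of v] e graph_edge[OF G e(1)] v unfolding V'_def by auto
    qed
  qed (auto simp: V'_def E'_def)
  obtain v0 where v0: "v0 \<in> V" "a v0 = 1" using atom_vertex[OF G A] by blast
  then have v0V': "v0 \<in> V'" unfolding V'_def by auto
  have allC: "\<forall>w\<in>V'. (v0, w) \<in> (adj E' r)\<^sup>*"
  proof (rule ccontr)
    assume "\<not> (\<forall>w\<in>V'. (v0, w) \<in> (adj E' r)\<^sup>*)"
    then obtain w where w: "w \<in> V'" "(v0, w) \<notin> (adj E' r)\<^sup>*" by blast
    define C where "C = {w\<in>V'. (v0, w) \<in> (adj E' r)\<^sup>*}"
    define b where "b = ind C {e\<in>E'. r e \<subseteq> C}"
    define c where "c = ind (V' - C) {e\<in>E'. \<not> r e \<subseteq> C}"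
    have sgV: "V' \<subseteq> V" "E' \<subseteq> E" "\<forall>e\<in>E'. r e \<subseteq> V'" using sg unfolding subgraph_def by auto
    have "subgraph V E r C {e\<in>E'. r e \<subseteq> C}"
      using sgV unfolding subgraph_def C_def by auto
    then have agb: "agg V E r b" unfolding b_def using ind_agg[OF G] by blast
    have "subgraph V E r (V' - C) {e\<in>E'. \<not> r e \<subseteq> C}"
      unfolding subgraph_def
    proof (intro conjI ballI)
      fix e assume e: "e \<in> {e\<in>E'. \<not> r e \<subseteq> C}"
      then obtain u where u: "u \<in> r e" "u \<notin> C" by blast
      show "r e \<subseteq> V' - C"
      proof
        fix x assume x: "x \<in> r e"
        have xV: "x \<in> V'" using sgV e x by blast
        have uV: "u \<in> V'" using sgV e u by blast
        show "x \<in> V' - C"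
        proof
          show "x \<in> V'" by fact
          show "x \<notin> C"
          proof
            assume "x \<in> C"
            then have "(v0, x) \<in> (adj E' r)\<^sup>*" unfolding C_def by auto
            moreover have "(x, u) \<in> adj E' r" using e x u unfolding adj_def by blast
            ultimately have "(v0, u) \<in> (adj E' r)\<^sup>*" by (rule rtrancl_into_rtrancl)
            then show False using u uV unfolding C_def by auto
          qed
        qed
      qed
    qed (use sgV in auto)
    then have agc: "agg V E r c" unfolding c_def using ind_agg[OF G] by blast
    have "b v0 = 1" using v0V' unfolding b_def ind_def C_def by auto
    then have bnz: "b \<noteq> azero" unfolding azero_def by (metis zero_neq_one)
    have "c w = 1" using w unfolding c_def ind_def C_def by auto
    then have cnz: "c \<noteq> azero" unfolding azero_def by (metis zero_neq_one)
    have "a = aplus b c"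
    proof
      fix x
      have d1: "x \<in> E' \<Longrightarrow> x \<notin> V'" using sgV disj by blast
      have d2: "C \<subseteq> V'" unfolding C_def by blast
      show "a x = aplus b c x"
      proof (cases "x \<in> E'")
        case True
        then show ?thesis using d1 d2 unfolding aeq aplus_def b_def c_def ind_def by auto
      next
        case False
        then show ?thesis using d2 unfolding aeq aplus_def b_def c_def ind_def by auto
      qed
    qed
    then show False using A agb agc bnz cnz unfolding atom_def by blast
  qed
  show "connected_sub V' r E'"
    unfolding connected_sub_def
  proof (intro conjI ballI)
    show "V' \<noteq> {}" using v0V' by blast
    fix u w assume "u \<in> V'" "w \<in> V'"
    then have "(v0, u) \<in> (adj E' r)\<^sup>*" "(v0, w) \<in> (adj E' r)\<^sup>*"
      using allC by blast+
    then show "(u, w) \<in> (adj E' r)\<^sup>*" using adj_rt_sym rtrancl_trans by metis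
  qed
qed
lemma conn_const:
  assumes G: "graph V E r" and sg: "subgraph V E r V' E'"
    and agb: "agg V E r b" and agc: "agg V E r c"
    and sum: "\<And>x. b x + c x = ind V' E' x"
    and u: "(v0, u) \<in> (adj E' r)\<^sup>*" and v0: "v0 \<in> V'"
  shows "b u = b v0"
  using u
proof (induction rule: rtrancl_induct)
  case base then show ?case by simp
next
  case (step y z)
  then obtain e where e: "e \<in> E'" "y \<in> r e" "z \<in> r e" unfolding adj_def by blast
  have eE: "e \<in> E" and yz: "y \<in> V'" "z \<in> V'" using sg e unfolding subgraph_def by auto
  have "b e + c e = 1" using sum[of e] e unfolding ind_def by auto
  moreover have "b y + c y = 1" "b z + c z = 1" using sum yz unfolding ind_def by auto
  moreover have "b e \<le> b y" "b e \<le> b z" "c e \<le> c y" "c e \<le> c z"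
    using agg_edge[OF agb eE] agg_edge[OF agc eE] e by auto
  ultimately have "b y = b z" by arith
  then show ?case using step by simp
qed

lemma zero_on_V':
  assumes G: "graph V E r" and sg: "subgraph V E r V' E'"
    and agb: "agg V E r b" and le: "\<And>x. b x \<le> ind V' E' x"
    and z: "\<forall>u\<in>V'. b u = 0"
  shows "b = azero"
proof
  fix x
  show "b x = azero x"
  proof (cases "x \<in> E'")
    case True
    then have "x \<in> E" "r x \<subseteq> V'" using sg unfolding subgraph_def by auto
    moreover obtain u where "u \<in> r x" using graph_edge[OF G \<open>x \<in> E\<close>] by blast
    ultimately show ?thesis using agg_edge[OF agb, of x u] z unfolding azero_def by auto
  next
    case False
    then show ?thesis using z le[of x] unfolding ind_def azero_def by (cases "x \<in> V'") auto
  qed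
qed

lemma conn_atom:
  assumes G: "graph V E r" and sg: "subgraph V E r V' E'" and cn: "connected_sub V' r E'"
  shows "atom V E r (ind V' E')"
proof -
  obtain v0 where v0: "v0 \<in> V'" using cn unfolding connected_sub_def by blast
  have nz: "ind V' E' \<noteq> azero" using v0 unfolding ind_def azero_def by (metis UnI1 one_neq_zero)
  have "\<not> (\<exists>b c. agg V E r b \<and> agg V E r c \<and> b \<noteq> azero \<and> c \<noteq> azero \<and> ind V' E' = aplus b c)"
  proof
    assume "\<exists>b c. agg V E r b \<and> agg V E r c \<and> b \<noteq> azero \<and> c \<noteq> azero \<and> ind V' E' = aplus b c"
    then obtain b c where bc: "agg V E r b" "agg V E r c" "b \<noteq> azero" "c \<noteq> azero" "ind V' E' = aplus b c"
      by blast
    have sum: "\<And>x. b x + c x = ind V' E' x" using bc(5) unfolding aplus_def by metis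
    have sum2: "\<And>x. c x + b x = ind V' E' x" using sum by (metis add.commute)
    have reach: "\<And>u. u \<in> V' \<Longrightarrow> (v0, u) \<in> (adj E' r)\<^sup>*" using cn v0 unfolding connected_sub_def by blast
    have cb: "\<forall>u\<in>V'. b u = b v0" using conn_const[OF G sg bc(1) bc(2) sum _ v0] reach by blast
    have cc: "\<forall>u\<in>V'. c u = c v0" using conn_const[OF G sg bc(2) bc(1) sum2 _ v0] reach by blast
    have "b v0 + c v0 = 1" using sum[of v0] v0 unfolding ind_def by auto
    then have "b v0 = 0 \<or> c v0 = 0" by arith
    then show False
    proof
      assume "b v0 = 0"
      then have "b = azero" using zero_on_V'[OF G sg bc(1)] cb sum by (metis le_add1)
      then show False using bc(3) by blast
    next
      assume "c v0 = 0"
      then have "c = azero" using zero_on_V'[OF G sg bc(2)] cc sum2 by (metis le_add1)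
      then show False using bc(4) by blast
    qed
  qed
  then show ?thesis using nz ind_agg[OF G sg] unfolding atom_def by blast
qed

lemma summand_char:
  assumes G: "graph V E r" and sg: "subgraph V E r V' E'" and agx: "agg V E r x"
  shows "summand V E r (ind V' E') x \<longleftrightarrow>
    (\<forall>y\<in>V' \<union> E'. 1 \<le> x y) \<and> (\<forall>e\<in>E. \<forall>v\<in>r e. v \<in> V' \<longrightarrow> e \<notin> E' \<longrightarrow> x e < x v)"
proof -
  have sgV: "V' \<subseteq> V" "E' \<subseteq> E" "\<forall>e\<in>E'. r e \<subseteq> V'" using sg unfolding subgraph_def by auto
  have disj: "\<And>x. x \<in> V \<Longrightarrow> x \<notin> E" using graph_disj[OF G] .
  show ?thesis
  proof
    assume "summand V E r (ind V' E') x"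
    then obtain c where c: "agg V E r c" "x = aplus (ind V' E') c" unfolding summand_def by blast
    have xv: "\<And>y. x y = ind V' E' y + c y" using c(2) unfolding aplus_def by simp
    show "(\<forall>y\<in>V' \<union> E'. 1 \<le> x y) \<and> (\<forall>e\<in>E. \<forall>v\<in>r e. v \<in> V' \<longrightarrow> e \<notin> E' \<longrightarrow> x e < x v)"
    proof (intro conjI ballI impI)
      fix y assume "y \<in> V' \<union> E'" then show "1 \<le> x y" using xv[of y] unfolding ind_def by auto
    next
      fix e v assume ev: "e \<in> E" "v \<in> r e" "v \<in> V'" "e \<notin> E'"
      have "e \<notin> V'" using ev sgV disj by blast
      then have "ind V' E' e = 0" "ind V' E' v = 1" using ev unfolding ind_def by auto
      moreover have "c e \<le> c v" using agg_edge[OF c(1) ev(1,2)] .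
      ultimately show "x e < x v" using xv[of e] xv[of v] by simp
    qed
  next
    assume H: "(\<forall>y\<in>V' \<union> E'. 1 \<le> x y) \<and> (\<forall>e\<in>E. \<forall>v\<in>r e. v \<in> V' \<longrightarrow> e \<notin> E' \<longrightarrow> x e < x v)"
    define c where "c = (\<lambda>y. x y - ind V' E' y)"
    have le: "\<And>y. ind V' E' y \<le> x y" using H unfolding ind_def by auto
    have "agg V E r c" unfolding agg_def
    proof (intro conjI allI impI ballI)
      fix y assume "y \<notin> V \<union> E" then show "c y = 0" using agg_out[OF agx, of y] unfolding c_def by simp
    next
      fix e v assume ev: "e \<in> E" "v \<in> r e"
      have xe: "x e \<le> x v" using agg_edge[OF agx ev] .
      have vV: "v \<in> V" using graph_edge[OF G ev(1)] ev(2) by blast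
      have "e \<notin> V'" "v \<notin> E'" using ev vV sgV disj by blast+
      moreover have "e \<in> E' \<Longrightarrow> v \<in> V'" using sgV ev by blast
      moreover have "v \<in> V' \<Longrightarrow> e \<notin> E' \<Longrightarrow> x e < x v" using H ev by blast
      ultimately show "c e \<le> c v" unfolding c_def ind_def using xe by auto
    qed
    moreover have "x = aplus (ind V' E') c" unfolding aplus_def c_def using le by (auto simp: fun_eq_iff)
    ultimately show "summand V E r (ind V' E') x" unfolding summand_def by blast
  qed
qed
lemma piece:
  assumes G: "graph V E r" and sg: "subgraph V E r V' E'"
    and v: "v \<in> V'" and e0: "e0 \<in> E" "v \<in> r e0"
  defines "P \<equiv> (if e0 \<in> E' then ind V' (E' - {e0}) else ind (V' \<union> r e0) (E' \<union> {e0}))"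
  shows "agg V E r P" "\<forall>y\<in>V'. P y = 1" "\<forall>y\<in>E'. y \<noteq> e0 \<longrightarrow> P y = 1"
    "\<forall>e\<in>E. e \<notin> E' \<longrightarrow> e \<noteq> e0 \<longrightarrow> P e = 0" "P e0 \<le> 1"
    "\<not> summand V E r (ind V' E') P"
proof -
  have sgV: "V' \<subseteq> V" "E' \<subseteq> E" "\<forall>e\<in>E'. r e \<subseteq> V'" using sg unfolding subgraph_def by auto
  have disj: "\<And>x. x \<in> V \<Longrightarrow> x \<notin> E" using graph_disj[OF G] .
  have re0: "r e0 \<subseteq> V" using graph_edge[OF G e0(1)] by blast
  show agP: "agg V E r P"
  proof (cases "e0 \<in> E'")
    case True
    have "subgraph V E r V' (E' - {e0})" using sgV unfolding subgraph_def by auto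
    then show ?thesis using True ind_agg[OF G] unfolding P_def by simp
  next
    case False
    have "subgraph V E r (V' \<union> r e0) (E' \<union> {e0})" using sgV re0 e0 unfolding subgraph_def by auto
    then show ?thesis using False ind_agg[OF G] unfolding P_def by simp
  qed
  show "\<forall>y\<in>V'. P y = 1" unfolding P_def ind_def by auto
  show "\<forall>y\<in>E'. y \<noteq> e0 \<longrightarrow> P y = 1" unfolding P_def ind_def by auto
  show "\<forall>e\<in>E. e \<notin> E' \<longrightarrow> e \<noteq> e0 \<longrightarrow> P e = 0"
    using sgV re0 disj unfolding P_def ind_def by auto
  show "P e0 \<le> 1" unfolding P_def ind_def by auto
  show "\<not> summand V E r (ind V' E') P"
  proof (cases "e0 \<in> E'")
    case True
    have "P e0 = 0" using True disj e0 sgV unfolding P_def ind_def by auto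
    then show ?thesis using summand_char[OF G sg agP] True by force
  next
    case False
    have "P e0 = 1" "P v = 1" using False v unfolding P_def ind_def by auto
    then show ?thesis using summand_char[OF G sg agP] False e0 v by force
  qed
qed

lemma prime_deg:
  assumes G: "graph V E r" and sg: "subgraph V E r V' E'"
    and pr: "prime_agg V E r (ind V' E')" and v: "v \<in> V'"
  shows "deg E r v \<le> 1"
proof (rule ccontr)
  assume "\<not> deg E r v \<le> 1"
  moreover have fin: "finite {e\<in>E. v \<in> r e}" using G unfolding graph_def by auto
  ultimately have "\<not> (\<forall>a1\<in>{e\<in>E. v \<in> r e}. \<forall>a2\<in>{e\<in>E. v \<in> r e}. a1 = a2)"
    using card_le_Suc0_iff_eq[OF fin] unfolding deg_def by simp
  then obtain e1 e2 where e: "e1 \<in> E" "v \<in> r e1" "e2 \<in> E" "v \<in> r e2" "e1 \<noteq> e2"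
    by blast
  define b where "b = (if e1 \<in> E' then ind V' (E' - {e1}) else ind (V' \<union> r e1) (E' \<union> {e1}))"
  define c where "c = (if e2 \<in> E' then ind V' (E' - {e2}) else ind (V' \<union> r e2) (E' \<union> {e2}))"
  note pb = piece[OF G sg v e(1,2), folded b_def]
  note pc = piece[OF G sg v e(3,4), folded c_def]
  have agbc: "agg V E r (aplus b c)" using agg_plus pb(1) pc(1) by blast
  have sgV: "V' \<subseteq> V" "E' \<subseteq> E" "\<forall>e\<in>E'. r e \<subseteq> V'" using sg unfolding subgraph_def by auto
  have "summand V E r (ind V' E') (aplus b c)"
    unfolding summand_char[OF G sg agbc]
  proof (intro conjI ballI impI)
    fix y assume "y \<in> V' \<union> E'"
    then show "1 \<le> aplus b c y" using pb(2,3) pc(2,3) e(5) unfolding aplus_def by (metis UnE le_add1 le_add2)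
  next
    fix f w assume fw: "f \<in> E" "w \<in> r f" "w \<in> V'" "f \<notin> E'"
    have "b w + c w = 2" using pb(2) pc(2) fw(3) by simp
    moreover have "b f + c f \<le> 1"
    proof (cases "f = e1")
      case True then show ?thesis using pb(5) pc(4) fw e(5) by auto
    next
      case False then show ?thesis using pb(4) pc(4,5) fw by (cases "f = e2") auto
    qed
    ultimately show "aplus b c f < aplus b c w" unfolding aplus_def by simp
  qed
  then show False using pr pb(1,6) pc(1,6) unfolding prime_agg_def by blast
qed
lemma deg_uniq:
  assumes G: "graph V E r" and d: "deg E r v \<le> 1"
    and "e \<in> E" "v \<in> r e" "e' \<in> E" "v \<in> r e'"
  shows "e = e'"
proof -
  have fin: "finite {e\<in>E. v \<in> r e}" using G unfolding graph_def by auto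
  have "\<forall>a1\<in>{e\<in>E. v \<in> r e}. \<forall>a2\<in>{e\<in>E. v \<in> r e}. a1 = a2"
    using card_le_Suc0_iff_eq[OF fin] d unfolding deg_def by simp
  then show ?thesis using assms(3-) by blast
qed

lemma deg_prime:
  assumes G: "graph V E r" and sg: "subgraph V E r V' E'" and cn: "connected_sub V' r E'"
    and d: "\<forall>v\<in>V'. deg E r v \<le> 1"
  shows "prime_agg V E r (ind V' E')"
proof -
  have sgV: "V' \<subseteq> V" "E' \<subseteq> E" "\<forall>e\<in>E'. r e \<subseteq> V'" using sg unfolding subgraph_def by auto
  have at: "atom V E r (ind V' E')" using conn_atom[OF G sg cn] .
  have "\<forall>b c. agg V E r b \<longrightarrow> agg V E r c \<longrightarrow> summand V E r (ind V' E') (aplus b c) \<longrightarrow>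
        summand V E r (ind V' E') b \<or> summand V E r (ind V' E') c"
  proof (cases "E' = {}")
    case True
    obtain v where v: "v \<in> V'" using cn unfolding connected_sub_def by blast
    have "adj E' r = {}" using True unfolding adj_def by auto
    then have V'eq: "V' = {v}" using cn v unfolding connected_sub_def by auto
    have dv: "deg E r v \<le> 1" using d v by blast
    show ?thesis
    proof (intro allI impI)
      fix b c assume agb: "agg V E r b" and agc: "agg V E r c"
        and s: "summand V E r (ind V' E') (aplus b c)"
      have agbc: "agg V E r (aplus b c)" using agg_plus agb agc by blast
      note ch = summand_char[OF G sg]
      have s': "1 \<le> b v + c v" "\<forall>e\<in>E. v \<in> r e \<longrightarrow> b e + c e < b v + c v"
        using s unfolding ch[OF agbc] using True V'eq unfolding aplus_def by auto
      have goal: "\<And>x. agg V E r x \<Longrightarrow> summand V E r (ind V' E') x \<longleftrightarrow>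
          (1 \<le> x v \<and> (\<forall>e\<in>E. v \<in> r e \<longrightarrow> x e < x v))"
        unfolding ch using True V'eq by auto
      show "summand V E r (ind V' E') b \<or> summand V E r (ind V' E') c"
      proof (cases "\<exists>e\<in>E. v \<in> r e")
        case False
        then show ?thesis unfolding goal[OF agb] goal[OF agc] using s'(1) by auto
      next
        case True
        then obtain e0 where e0: "e0 \<in> E" "v \<in> r e0" by blast
        have u: "\<And>e. e \<in> E \<Longrightarrow> v \<in> r e \<Longrightarrow> e = e0" using deg_uniq[OF G dv _ _ e0] by blast
        have key: "\<And>x :: 'a \<Rightarrow> nat. x e0 < x v \<Longrightarrow> 1 \<le> x v \<and> (\<forall>e\<in>E. v \<in> r e \<longrightarrow> x e < x v)"
        proof -
          fix x :: "'a \<Rightarrow> nat" assume "x e0 < x v"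
          moreover have "\<forall>e\<in>E. v \<in> r e \<longrightarrow> e = e0" using u by blast
          ultimately show "1 \<le> x v \<and> (\<forall>e\<in>E. v \<in> r e \<longrightarrow> x e < x v)" by auto
        qed
        have "b e0 < b v \<or> c e0 < c v" using s'(2) e0 by auto
        then show ?thesis unfolding goal[OF agb] goal[OF agc] using key by blast
      qed
    qed
  next
    case False
    then obtain e where e: "e \<in> E'" by blast
    have eE: "e \<in> E" using e sgV by blast
    have reV: "r e \<subseteq> V'" using e sgV by blast
    have uq: "\<And>u e'. u \<in> r e \<Longrightarrow> e' \<in> E \<Longrightarrow> u \<in> r e' \<Longrightarrow> e' = e"
      using deg_uniq[OF G] d reV eE by blast
    obtain u0 where u0: "u0 \<in> r e" using graph_edge[OF G eE] by blast
    have V'eq: "V' = r e"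
    proof
      show "r e \<subseteq> V'" by fact
      show "V' \<subseteq> r e"
      proof
        fix w assume "w \<in> V'"
        then have "(u0, w) \<in> (adj E' r)\<^sup>*" using cn u0 reV unfolding connected_sub_def by blast
        then show "w \<in> r e"
        proof (induction rule: rtrancl_induct)
          case base then show ?case using u0 .
        next
          case (step y z)
          then obtain e' where e': "e' \<in> E'" "y \<in> r e'" "z \<in> r e'" unfolding adj_def by blast
          have "e' = e" using uq[OF step.IH _ e'(2)] e' sgV by blast
          then show ?case using e' by simp
        qed
      qed
    qed
    have E'eq: "E' = {e}"
    proof
      show "E' \<subseteq> {e}"
      proof
        fix f assume f: "f \<in> E'"
        then have fE: "f \<in> E" using sgV by blast
        obtain u where u: "u \<in> r f" using graph_edge[OF G fE] by blast
        then have "u \<in> r e" using f sgV V'eq by blast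
        then show "f \<in> {e}" using uq fE u by blast
      qed
    qed (use e in blast)
    note ch = summand_char[OF G sg]
    have goal: "\<And>x. agg V E r x \<Longrightarrow> summand V E r (ind V' E') x \<longleftrightarrow> 1 \<le> x e"
    proof -
      fix x assume agx: "agg V E r x"
      show "summand V E r (ind V' E') x \<longleftrightarrow> 1 \<le> x e"
        unfolding ch[OF agx]
      proof (intro iffI conjI ballI impI)
        assume "1 \<le> x e"
        fix y assume "y \<in> V' \<union> E'"
        then show "1 \<le> x y" using agg_edge[OF agx eE, of y] \<open>1 \<le> x e\<close> V'eq E'eq by auto
      next
        fix f w assume "f \<in> E" "w \<in> r f" "w \<in> V'" "f \<notin> E'"
        then show "x f < x w" using uq V'eq E'eq by blast
      qed (use e in auto)
    qed
    show ?thesis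
    proof (intro allI impI)
      fix b c assume agb: "agg V E r b" and agc: "agg V E r c"
        and s: "summand V E r (ind V' E') (aplus b c)"
      have "1 \<le> b e + c e" using s goal[OF agg_plus[OF agb agc]] unfolding aplus_def by simp
      then show "summand V E r (ind V' E') b \<or> summand V E r (ind V' E') c"
        using goal[OF agb] goal[OF agc] by auto
    qed
  qed
  then show ?thesis using at unfolding prime_agg_def by blast
qed

lemma part1:
  assumes G: "graph V E r" and A: "atom V E r a"
  shows "prime_agg V E r a \<longleftrightarrow> (\<forall>v\<in>V. a v > 0 \<longrightarrow> deg E r v \<le> 1)"
proof -
  define V' where "V' = {v\<in>V. a v = 1}"
  define E' where "E' = {e\<in>E. a e = 1}"
  have f: "a = ind V' E'" "subgraph V E r V' E'" "connected_sub V' r E'"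
    using atom_form[OF G A] unfolding V'_def E'_def by blast+
  have le: "\<And>x. a x \<le> 1" using atom_le1[OF A] .
  have eq: "\<And>v. v \<in> V \<Longrightarrow> a v > 0 \<longleftrightarrow> v \<in> V'" using le unfolding V'_def
    by (metis (mono_tags, lifting) le_neq_implies_less less_one mem_Collect_eq not_gr_zero)
  show ?thesis
  proof
    assume "prime_agg V E r a"
    then show "\<forall>v\<in>V. a v > 0 \<longrightarrow> deg E r v \<le> 1" using prime_deg[OF G f(2)] f(1) eq by metis
  next
    assume "\<forall>v\<in>V. a v > 0 \<longrightarrow> deg E r v \<le> 1"
    then have "\<forall>v\<in>V'. deg E r v \<le> 1" using eq unfolding V'_def by blast
    then show "prime_agg V E r a" using deg_prime[OF G f(2,3)] f(1) by simp
  qed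
qed
lemma msum_add: "msum (add_mset f M) x = f x + msum M x"
  unfolding msum_def by simp

lemma msum_empty: "msum {#} x = 0"
  unfolding msum_def by simp

lemma msum_ge: "f \<in># M \<Longrightarrow> f x \<le> msum M x"
  by (metis le_add1 msum_add multi_member_split)

lemma msum_two:
  assumes "f \<in># M" "g \<in># M" "f \<noteq> g"
  shows "f x + g x \<le> msum M x"
proof -
  obtain M' where M': "M = add_mset f M'" using assms(1) multi_member_split by metis
  then have "g \<in># M'" using assms by auto
  then obtain M'' where "M' = add_mset g M''" using multi_member_split by metis
  then show ?thesis using M' by (simp add: msum_add)
qed

lemma msum_pos: "0 < msum M x \<Longrightarrow> \<exists>f\<in>#M. 0 < f x"
  by (induction M) (auto simp: msum_add msum_empty)

lemma msum_mono: "(\<And>g. g \<in># M \<Longrightarrow> g x \<le> g y) \<Longrightarrow> msum M x \<le> msum M y"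
  unfolding msum_def by (rule sum_mset_mono)

lemma msum_rep: "msum (replicate_mset n a) x = n * a x"
  by (induction n) (auto simp: msum_add msum_empty)

lemma mset_single_rep: "(\<forall>f\<in>#M. f = a) \<Longrightarrow> M = replicate_mset (size M) a"
  by (induction M) auto

lemma part2:
  assumes A: "atom V E r a" and agb: "agg V E r b" and n: "n \<ge> 1"
    and s: "summand V E r a (asmult n b)"
  shows "summand V E r a b"
proof -
  obtain c where c: "agg V E r c" "asmult n b = aplus a c" using s unfolding summand_def by blast
  have nb: "\<And>y. n * b y = a y + c y" using c(2) unfolding asmult_def aplus_def by metis
  have le: "\<And>y. a y \<le> 1" using atom_le1[OF A] .
  have aga: "agg V E r a" using A unfolding atom_def by blast
  have ab: "\<And>y. a y \<le> b y"
  proof -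
    fix y
    show "a y \<le> b y"
    proof (cases "a y = 0")
      case False
      then have "a y = 1" using le[of y] by arith
      then have "n * b y \<noteq> 0" using nb[of y] by simp
      then show ?thesis using \<open>a y = 1\<close> by simp
    qed simp
  qed
  define c' where "c' = (\<lambda>y. b y - a y)"
  have "agg V E r c'" unfolding agg_def
  proof (intro conjI allI impI ballI)
    fix y assume "y \<notin> V \<union> E" then show "c' y = 0" using agg_out[OF agb, of y] unfolding c'_def by simp
  next
    fix e v assume ev: "e \<in> E" "v \<in> r e"
    have 1: "b e \<le> b v" "a e \<le> a v" "c e \<le> c v" using agg_edge[OF agb ev] agg_edge[OF aga ev] agg_edge[OF c(1) ev] by auto
    show "c' e \<le> c' v"
    proof (cases "a e = a v")
      case True then show ?thesis unfolding c'_def using 1 by simp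
    next
      case False
      then have ae: "a e = 0" "a v = 1" using 1 le[of v] by arith+
      have "n * b e < n * b v" using nb[of e] nb[of v] ae 1 by simp
      then have "b e < b v" by (metis mult_le_mono2 not_le)
      then show ?thesis unfolding c'_def using ae by simp
    qed
  qed
  moreover have "b = aplus a c'" unfolding aplus_def c'_def using ab by (auto simp: fun_eq_iff)
  ultimately show ?thesis unfolding summand_def by blast
qed
lemma part3:
  assumes G: "graph V E r" and A: "atom V E r a"
  shows "abs_irred V E r a"
  unfolding abs_irred_def
proof (intro conjI allI impI)
  show "atom V E r a" by fact
  fix n :: nat and M assume n: "1 \<le> n" and fM: "factorization V E r (asmult n a) M"
  define V' where "V' = {v\<in>V. a v = 1}"
  define E' where "E' = {e\<in>E. a e = 1}"
  have fa: "a = ind V' E'" "subgraph V E r V' E'" "connected_sub V' r E'"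
    using atom_form[OF G A] unfolding V'_def E'_def by blast+
  have sgV: "V' \<subseteq> V" "E' \<subseteq> E" "\<forall>e\<in>E'. r e \<subseteq> V'" using fa(2) unfolding subgraph_def by auto
  have at: "\<And>f. f \<in># M \<Longrightarrow> atom V E r f" and ms0: "(\<lambda>x. n * a x) = msum M"
    using fM unfolding factorization_def asmult_def by auto
  have ms: "\<And>x. msum M x = n * a x" using ms0 by metis
  have all: "\<forall>f\<in>#M. f = a"
  proof
    fix f assume fM: "f \<in># M"
    have af: "atom V E r f" using at[OF fM] .
    have agf: "agg V E r f" using af unfolding atom_def by blast
    have fle: "\<And>x. f x \<le> 1" using atom_le1[OF af] .
    have fz: "\<And>x. a x = 0 \<Longrightarrow> f x = 0" using msum_ge[OF fM] ms by (metis le_zero_eq mult_0_right)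
    obtain M' where M': "M = add_mset f M'" using fM multi_member_split by metis
    have eq: "\<And>e u. e \<in> E' \<Longrightarrow> u \<in> r e \<Longrightarrow> f e = f u"
    proof -
      fix e u assume e: "e \<in> E'" and u: "u \<in> r e"
      have eE: "e \<in> E" using e sgV by blast
      have "u \<in> V'" using e u sgV by blast
      then have "a e = 1" "a u = 1" using e fa(1) unfolding ind_def by auto
      then have "msum M e = msum M u" using ms by simp
      then have "f e + msum M' e = f u + msum M' u" using M' by (simp add: msum_add)
      moreover have "msum M' e \<le> msum M' u"
      proof (rule msum_mono)
        fix g assume "g \<in># M'"
        then have "atom V E r g" using M' at by simp
        then have "agg V E r g" unfolding atom_def by blast
        then show "g e \<le> g u" using eE u by (rule agg_edge)
      qed
      moreover have "f e \<le> f u" using agg_edge[OF agf eE u] .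
      ultimately show "f e = f u" by arith
    qed
    obtain v0 where v0: "v0 \<in> V" "f v0 = 1" using atom_vertex[OF G af] by blast
    have "a v0 \<noteq> 0" using fz[of v0] v0 by auto
    then have v0V': "v0 \<in> V'" using v0 atom_le1[OF A, of v0] unfolding V'_def by auto
    have fV': "\<And>u. u \<in> V' \<Longrightarrow> f u = 1"
    proof -
      fix u assume "u \<in> V'"
      then have "(v0, u) \<in> (adj E' r)\<^sup>*" using fa(3) v0V' unfolding connected_sub_def by blast
      then show "f u = 1"
      proof (induction rule: rtrancl_induct)
        case base then show ?case using v0 by simp
      next
        case (step y z)
        then obtain e where e: "e \<in> E'" "y \<in> r e" "z \<in> r e" unfolding adj_def by blast
        then show ?case using eq[OF e(1,2)] eq[OF e(1,3)] step.IH by simp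
      qed
    qed
    have fE': "\<And>e. e \<in> E' \<Longrightarrow> f e = 1"
    proof -
      fix e assume e: "e \<in> E'"
      then obtain u where u: "u \<in> r e" using graph_edge[OF G] sgV by blast
      then have "u \<in> V'" using e sgV by blast
      then show "f e = 1" using eq[OF e u] fV' by simp
    qed
    show "f = a"
    proof
      fix x
      show "f x = a x"
      proof (cases "x \<in> V' \<union> E'")
        case True
        then show ?thesis using fV' fE' fa(1) unfolding ind_def by auto
      next
        case False
        then have "a x = 0" using fa(1) unfolding ind_def by simp
        then show ?thesis using fz by simp
      qed
    qed
  qed
  then have Mr: "M = replicate_mset (size M) a" by (rule mset_single_rep)
  obtain v0 where v0: "v0 \<in> V" "a v0 = 1" using atom_vertex[OF G A] by blast
  have "size M * a v0 = n * a v0" using ms[of v0] msum_rep[of "size M" a v0] Mr by metis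
  then have "size M = n" using v0 by simp
  then show "M = replicate_mset n a" using Mr by simp
qed
lemma edge_step:
  assumes G: "graph V E r" and fM: "f \<in># M" and gN: "g \<in># N"
    and atN: "\<forall>h\<in>#N. atom V E r h" and eqm: "msum M = msum N"
    and le1: "\<And>x. msum N x \<le> 1"
    and e: "e \<in> E" "f e = 1" and y: "y \<in> r e" and gy: "g y = 1"
  shows "g e = 1"
proof -
  have "0 < msum N e" using msum_ge[OF fM, of e] e eqm by simp
  then obtain g' where g': "g' \<in># N" "0 < g' e" using msum_pos[of N e] by blast
  have agg': "agg V E r g'" using atN g' unfolding atom_def by blast
  have "g' e \<le> g' y" using agg' e(1) y by (rule agg_edge)
  then have gy': "0 < g' y" using g' by simp
  have "g' = g"
  proof (rule ccontr)
    assume "g' \<noteq> g"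
    then have "g y + g' y \<le> msum N y" using msum_two[OF gN g'(1)] by metis
    then show False using le1[of y] gy gy' by simp
  qed
  moreover have "g e \<le> 1" using atom_le1[of V E r g e] atN gN by blast
  ultimately show ?thesis using g' by simp
qed

lemma propag:
  assumes G: "graph V E r" and fM: "f \<in># M" and gN: "g \<in># N"
    and atM: "\<forall>h\<in>#M. atom V E r h" and atN: "\<forall>h\<in>#N. atom V E r h" and eqm: "msum M = msum N"
    and le1: "\<And>x. msum N x \<le> 1"
    and v0: "v0 \<in> V" "f v0 = 1" "g v0 = 1"
  shows "f x \<le> g x"
proof -
  have af: "atom V E r f" using atM fM by blast
  have ag: "atom V E r g" using atN gN by blast
  define V' where "V' = {v\<in>V. f v = 1}"
  define E' where "E' = {e\<in>E. f e = 1}"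
  have fa: "f = ind V' E'" "subgraph V E r V' E'" "connected_sub V' r E'"
    using atom_form[OF G af] unfolding V'_def E'_def by blast+
  have sgV: "V' \<subseteq> V" "E' \<subseteq> E" "\<forall>e\<in>E'. r e \<subseteq> V'" using fa(2) unfolding subgraph_def by auto
  have v0V': "v0 \<in> V'" using v0 unfolding V'_def by simp
  note st = edge_step[OF G fM gN atN eqm le1]
  have gV: "\<And>u. u \<in> V' \<Longrightarrow> g u = 1"
  proof -
    fix u assume "u \<in> V'"
    then have "(v0, u) \<in> (adj E' r)\<^sup>*" using fa(3) v0V' unfolding connected_sub_def by blast
    then show "g u = 1"
    proof (induction rule: rtrancl_induct)
      case base then show ?case using v0 by simp
    next
      case (step y z)
      then obtain e where e: "e \<in> E'" "y \<in> r e" "z \<in> r e" unfolding adj_def by blast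
      have eE: "e \<in> E" "f e = 1" using e unfolding E'_def by auto
      have "g e = 1" using st[OF eE e(2) step.IH] .
      moreover have "g e \<le> g z" using agg_edge[of V E r g e z] ag eE e(3) unfolding atom_def by blast
      ultimately show ?case using atom_le1[OF ag, of z] by simp
    qed
  qed
  show ?thesis
  proof (cases "f x = 0")
    case False
    then have fx: "f x = 1" using atom_le1[OF af, of x] by simp
    have "x \<in> V' \<union> E'" using fx fa(1) unfolding ind_def by (auto split: if_splits)
    then show ?thesis
    proof
      assume "x \<in> V'" then show ?thesis using gV fx by simp
    next
      assume xE: "x \<in> E'"
      then obtain y where y: "y \<in> r x" using graph_edge[OF G] sgV by blast
      then have "y \<in> V'" using xE sgV by blast
      then have "g x = 1" using st[of x y] xE y gV unfolding E'_def by auto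
      then show ?thesis using fx by simp
    qed
  qed simp
qed

lemma fact_unique:
  assumes G: "graph V E r"
  shows "(\<And>x. msum M x \<le> 1) \<Longrightarrow> \<forall>h\<in>#M. atom V E r h \<Longrightarrow> \<forall>h\<in>#N. atom V E r h \<Longrightarrow>
    msum M = msum N \<Longrightarrow> M = N"
proof (induction M arbitrary: N)
  case empty
  show ?case
  proof (rule ccontr)
    assume "{#} \<noteq> N"
    then obtain g where g: "g \<in># N" by (metis multiset_nonemptyE)
    then have "atom V E r g" using empty by blast
    then obtain v where "v \<in> V" "g v = 1" using atom_vertex[OF G] by blast
    then have "1 \<le> msum N v" using msum_ge[OF g, of v] by simp
    then show False using empty(4) msum_empty[of v] by (metis not_one_le_zero)
  qed
next
  case (add f M)
  have af: "atom V E r f" using add by simp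
  obtain v0 where v0: "v0 \<in> V" "f v0 = 1" using atom_vertex[OF G af] by blast
  have "0 < msum N v0" using add(5) msum_add[of f M v0] v0 by (metis less_one not_less trans_less_add1 zero_less_Suc One_nat_def add_gr_0)
  then obtain g where g: "g \<in># N" "0 < g v0" using msum_pos[of N v0] by blast
  have ag: "atom V E r g" using add g by blast
  have gv: "g v0 = 1" using g atom_le1[OF ag, of v0] by simp
  have le1N: "\<And>x. msum N x \<le> 1" using add(2) add(5) by metis
  have fin: "f \<in># add_mset f M" by simp
  have fg: "\<And>x. f x \<le> g x"
    using propag[OF G fin g(1) add(3) add(4) add(5) le1N v0 gv] by simp
  have gf: "\<And>x. g x \<le> f x"
    using propag[OF G g(1) fin add(4) add(3) add(5)[symmetric] add(2) v0(1) gv v0(2)] by simp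
  have "f = g" using fg gf by (simp add: fun_eq_iff le_antisym)
  then obtain N' where N': "N = add_mset f N'" using g(1) multi_member_split by metis
  have "msum M = msum N'"
  proof
    fix x show "msum M x = msum N' x" using add(5) N' by (metis add_left_cancel msum_add)
  qed
  moreover have "\<And>x. msum M x \<le> 1" using add(2) by (metis le_add2 msum_add order_trans)
  moreover have "\<forall>h\<in>#M. atom V E r h" using add(3) by simp
  moreover have "\<forall>h\<in>#N'. atom V E r h" using add(4) N' by simp
  ultimately have "M = N'" using add.IH[of N'] by blast
  then show ?case using N' by simp
qed
lemma part4:
  fixes s :: nat
  assumes G: "graph V E r"
    and sg: "\<forall>i<s. subgraph V E r (Vs i) (Es i) \<and> connected_sub (Vs i) r (Es i)"
    and dj: "\<forall>i<s. \<forall>j<s. i \<noteq> j \<longrightarrow> (Vs i \<union> Es i) \<inter> (Vs j \<union> Es j) = {}"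
  shows "\<exists>!M. factorization V E r (\<lambda>x. \<Sum>i<s. ind (Vs i) (Es i) x) M"
proof -
  define A where "A = (\<lambda>x. \<Sum>i<s. ind (Vs i) (Es i) x)"
  define M0 where "M0 = image_mset (\<lambda>i. ind (Vs i) (Es i)) (mset_set {..<s})"
  have ms0: "msum M0 = A"
  proof
    fix x
    show "msum M0 x = A x"
      unfolding msum_def M0_def A_def by (simp add: sum_unfold_sum_mset multiset.map_comp comp_def)
  qed
  have at0: "\<forall>h\<in>#M0. atom V E r h"
    unfolding M0_def
  proof
    fix h assume "h \<in># image_mset (\<lambda>i. ind (Vs i) (Es i)) (mset_set {..<s})"
    then obtain i where "i \<in># mset_set {..<s}" "h = ind (Vs i) (Es i)" by auto
    then have "i < s" "h = ind (Vs i) (Es i)" by simp_all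
    then show "atom V E r h" using sg conn_atom[OF G] by blast
  qed
  have A1: "\<And>x. A x \<le> 1"
  proof -
    fix x
    show "A x \<le> 1"
    proof (cases "\<exists>i<s. x \<in> Vs i \<union> Es i")
      case True
      then obtain i where i: "i < s" "x \<in> Vs i \<union> Es i" by blast
      have "A x = (\<Sum>j<s. if j = i then 1 else 0)"
        unfolding A_def
      proof (rule sum.cong)
        fix j assume "j \<in> {..<s}"
        then show "ind (Vs j) (Es j) x = (if j = i then 1 else 0)"
          using i dj unfolding ind_def by auto
      qed simp
      also have "\<dots> = 1" using i by simp
      finally show ?thesis by simp
    next
      case False
      then have "A x = 0" unfolding A_def ind_def by simp
      then show ?thesis by simp
    qed
  qed
  show ?thesis
    unfolding A_def[symmetric]
  proof (rule ex1I[of _ M0])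
    show "factorization V E r A M0" unfolding factorization_def using at0 ms0 by simp
  next
    fix M assume "factorization V E r A M"
    then have atM: "\<forall>h\<in>#M. atom V E r h" and msM: "A = msum M" unfolding factorization_def by auto
    show "M = M0"
      using fact_unique[OF G, of M M0] atM at0 msM ms0 A1 by metis
  qed
qed

theorem lemma4p12:
  fixes V E :: "'a set" and r :: "'a \<Rightarrow> 'a set"
  assumes "graph V E r" and "V \<noteq> {}"
  shows "(\<forall>a. atom V E r a \<longrightarrow>
            (prime_agg V E r a \<longleftrightarrow> (\<forall>v\<in>V. a v > 0 \<longrightarrow> deg E r v \<le> 1)))
       \<and> (\<forall>a b n. atom V E r a \<longrightarrow> agg V E r b \<longrightarrow> n \<ge> 1 \<longrightarrow>
            summand V E r a (asmult n b) \<longrightarrow> summand V E r a b)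
       \<and> (\<forall>a. atom V E r a \<longrightarrow> abs_irred V E r a)
       \<and> (\<forall>(s::nat) Vs Es.
            (\<forall>i<s. subgraph V E r (Vs i) (Es i) \<and> connected_sub (Vs i) r (Es i)) \<longrightarrow>
            (\<forall>i<s. \<forall>j<s. i \<noteq> j \<longrightarrow> (Vs i \<union> Es i) \<inter> (Vs j \<union> Es j) = {}) \<longrightarrow>
            (\<exists>!M. factorization V E r (\<lambda>x. \<Sum>i<s. ind (Vs i) (Es i) x) M))"
  using part1[OF assms(1)] part2 part3[OF assms(1)] part4[OF assms(1)] by blast

end
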